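(* Let $S$ be a set and let $m:\mathcal{L}\to S$ and $M_1:S\times\Sigma\to\{1,-1,r\}$ be computable functions such that for all $\sigma\in\mathcal{L}$ and $s\in\Sigma$: $M_1(m(\sigma),s)=1$ if $\sigma$ determines $s$ with value $1$; $M_1(m(\sigma),s)=-1$ if $\sigma$ determines $s$ with value $-1$; and $M_1(m(\sigma),s)=r$ if $\sigma$ does not determine $s$. (That is, $\langle M,M_0,M_1,S\rangle$ with $M_0(\sigma,s)=(m(\sigma),s)$ and $M=M_1\circ M_0$ is a Memory-factoring Abstract Generating Automaton for $\mathcal{L}$.) Then $|S|\ge 24$.
   Context: Let $\Sigma=\{A,B,C,a,b,c,\alpha,\beta,\gamma\}$ be nine observables arranged in a $3\times 3$ square with rows $(A,B,C)$, $(a,b,c)$, $(\alpha,\beta,\gamma)$. The six \emph{contexts} are the three rows $\{A,B,C\},\{a,b,c\},\{\alpha,\beta,\gamma\}$ and the three columns $\{A,a,\alpha\},\{B,b,\beta\},\{C,c,\gamma\}$. Each context has a sign: $-1$ for $\{C,c,\gamma\}$ and $+1$ for the other five. Two distinct observables are \emph{compatible} if they lie in a common context, and \emph{incompatible} otherwise. Let $\tilde\Sigma=\{X,\tilde X: X\in\Sigma\}$ (18 letters); the letter $X$ means "observable $X$ measured with value $1$" and $\tilde X$ means "$X$ measured with value $-1$". For a word $w=t_1\cdots t_m\in\tilde\Sigma^*$ define inductively partial assignments $v_0,\dots,v_m:\Sigma\rightharpoonup\{1,-1\}$ (an observable in $\mathrm{dom}(v_i)$ is \emph{determined} after step $i$,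 with value $v_i(X)$), and whether $w$ is consistent: $v_0$ is the empty assignment. Given $v_{i-1}$, let $t_i$ record observable $X$ with value $\varepsilon$. If $X\in\mathrm{dom}(v_{i-1})$ and $v_{i-1}(X)\ne\varepsilon$, then $w$ is \emph{inconsistent}. Otherwise let $u$ be the restriction of $v_{i-1}$ to observables that are equal to or compatible with $X$, extended by $u(X)=\varepsilon$; then $v_i$ is obtained from $u$ by repeatedly doing the following until nothing changes: whenever a context has exactly two of its observables in the domain, assign the third observable the value making the product of the three values equal to the sign of that context. The word $w$ is \emph{consistent} if no step is inconsistent; $\mathcal{L}$ is the set of consistent words (it contains the empty word). For $w\in\mathcal{L}$ of length $m$: $w$ \emph{determines} an observable $s$ with value $v$ if $v_m(s)=v$, and $w$ does not determine $s$ if $s\notin\mathrm{dom}(v_m)$. The symbol $r$ is a third output value meaning "random/undetermined". *)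

theory Defs
  imports Main
begin

text \<open>The nine observables of the 3x3 square: rows (A,B,C), (a,b,c), (alpha,beta,gamma).\<close>
datatype obs = OA | OB | OC | Oa | Ob | Oc | Oalpha | Obeta | Ogamma

definition contexts :: "((obs \<times> obs \<times> obs) \<times> int) list" where
  "contexts = [((OA,OB,OC), 1), ((Oa,Ob,Oc), 1), ((Oalpha,Obeta,Ogamma), 1),
               ((OA,Oa,Oalpha), 1), ((OB,Ob,Obeta), 1), ((OC,Oc,Ogamma), -1)]"

definition ctx_set :: "obs \<times> obs \<times> obs \<Rightarrow> obs set" where
  "ctx_set t = (case t of (x,y,z) \<Rightarrow> {x,y,z})"

definition compatible :: "obs \<Rightarrow> obs \<Rightarrow> bool" where
  "compatible X Y \<longleftrightarrow> X \<noteq> Y \<and> (\<exists>(t,s)\<in>set contexts. X \<in> ctx_set t \<and> Y \<in> ctx_set t)"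

text \<open>Letters: X (value 1) and X-tilde (value -1).\<close>
datatype letter = Pos obs | Neg obs

fun letter_obs :: "letter \<Rightarrow> obs" where
  "letter_obs (Pos X) = X" | "letter_obs (Neg X) = X"

fun letter_val :: "letter \<Rightarrow> int" where
  "letter_val (Pos X) = 1" | "letter_val (Neg X) = -1"

type_synonym assignment = "obs \<Rightarrow> int option"

fun ctx_fill :: "assignment \<Rightarrow> (obs \<times> obs \<times> obs) \<times> int \<Rightarrow> assignment option" where
  "ctx_fill v ((x,y,z), s) =
     (case (v x, v y, v z) of
        (Some p, Some q, None) \<Rightarrow> Some (v(z := Some (s * p * q)))
      | (Some p, None, Some q) \<Rightarrow> Some (v(y := Some (s * p * q)))
      | (None, Some p, Some q) \<Rightarrow> Some (v(x := Some (s * p * q)))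
      | _ \<Rightarrow> None)"

fun prop_step_list :: "assignment \<Rightarrow> ((obs \<times> obs \<times> obs) \<times> int) list \<Rightarrow> assignment" where
  "prop_step_list v [] = v"
| "prop_step_list v (c # cs) = (case ctx_fill v c of Some v' \<Rightarrow> v' | None \<Rightarrow> prop_step_list v cs)"

definition prop_step :: "assignment \<Rightarrow> assignment" where
  "prop_step v = prop_step_list v contexts"

text \<open>Repeat until nothing changes; each effective step enlarges the domain (at most 9
  observables), so 9 iterations reach the fixpoint.\<close>
definition propagate :: "assignment \<Rightarrow> assignment" where
  "propagate v = (prop_step ^^ 9) v"

text \<open>Processing one letter; None = inconsistent.\<close>
definition process :: "assignment \<Rightarrow> letter \<Rightarrow> assignment option" where
  "process v t =
     (let X = letter_obs t; e = letter_val t in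
      if v X \<noteq> None \<and> v X \<noteq> Some e then None
      else Some (propagate ((\<lambda>Y. if compatible X Y then v Y else None)(X := Some e))))"

definition run :: "letter list \<Rightarrow> assignment option" where
  "run w = foldl (\<lambda>acc t. Option.bind acc (\<lambda>v. process v t)) (Some Map.empty) w"

definition consistent :: "letter list \<Rightarrow> bool" where
  "consistent w \<longleftrightarrow> run w \<noteq> None"

definition final_assign :: "letter list \<Rightarrow> assignment" where
  "final_assign w = the (run w)"

datatype outcome = One | MinusOne | R

end

theory Submission
  imports Defs
begin

lemma funpow_fix: "f v = v \<Longrightarrow> (f ^^ n) v = v"
  by (induct n) auto

lemma propagate_fix1: "prop_step v = v \<Longrightarrow> propagate v = v"
  unfolding propagate_def by (rule funpow_fix)

lemma propagate_fix2: "prop_step v = v' \<Longrightarrow> prop_step v' = v' \<Longrightarrow> propagate v = v'"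
  unfolding propagate_def by (simp add: funpow_Suc_right[of 8, simplified] funpow_fix del: funpow.simps)

lemma run_single: "run [t] = Some (Map.empty(letter_obs t \<mapsto> letter_val t))"
proof -
  have "prop_step (Map.empty(letter_obs t \<mapsto> letter_val t)) = Map.empty(letter_obs t \<mapsto> letter_val t)"
    by (cases t; cases "letter_obs t") (simp_all add: prop_step_def contexts_def)
  then show ?thesis
    by (simp add: run_def process_def Let_def propagate_fix1 fun_upd_def[symmetric])
qed

lemma run_cons2: "run [t1, t2] = Option.bind (run [t1]) (\<lambda>v. process v t2)"
  by (simp add: run_def)

lemma run_pair0: "run [Pos OA, Pos OB] = Some [OA \<mapsto> 1, OB \<mapsto> 1, OC \<mapsto> 1]"
proof -
  have e: "(\<lambda>Y. if compatible OB Y then [OA \<mapsto> (1::int)] Y else None)(OB \<mapsto> 1) = [OA \<mapsto> 1, OB \<mapsto> 1]"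
    by (auto simp: fun_eq_iff compatible_def contexts_def ctx_set_def)
  have p1: "prop_step [OA \<mapsto> 1, OB \<mapsto> 1] = [OA \<mapsto> 1, OB \<mapsto> 1, OC \<mapsto> 1]"
    by (simp add: prop_step_def contexts_def)
  have p2: "prop_step [OA \<mapsto> 1, OB \<mapsto> 1, OC \<mapsto> 1] = [OA \<mapsto> 1, OB \<mapsto> 1, OC \<mapsto> 1]"
    by (simp add: prop_step_def contexts_def)
  show ?thesis
    by (simp add: run_cons2 run_single process_def Let_def e propagate_fix2[OF p1 p2])
qed

lemma run_pair1: "run [Pos Oa, Pos Ob] = Some [Oa \<mapsto> 1, Ob \<mapsto> 1, Oc \<mapsto> 1]"
proof -
  have e: "(\<lambda>Y. if compatible Ob Y then [Oa \<mapsto> (1::int)] Y else None)(Ob \<mapsto> 1) = [Oa \<mapsto> 1, Ob \<mapsto> 1]"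
    by (auto simp: fun_eq_iff compatible_def contexts_def ctx_set_def)
  have p1: "prop_step [Oa \<mapsto> 1, Ob \<mapsto> 1] = [Oa \<mapsto> 1, Ob \<mapsto> 1, Oc \<mapsto> 1]"
    by (simp add: prop_step_def contexts_def)
  have p2: "prop_step [Oa \<mapsto> 1, Ob \<mapsto> 1, Oc \<mapsto> 1] = [Oa \<mapsto> 1, Ob \<mapsto> 1, Oc \<mapsto> 1]"
    by (simp add: prop_step_def contexts_def)
  show ?thesis
    by (simp add: run_cons2 run_single process_def Let_def e propagate_fix2[OF p1 p2])
qed

lemma run_pair2: "run [Pos Oalpha, Pos Obeta] = Some [Oalpha \<mapsto> 1, Obeta \<mapsto> 1, Ogamma \<mapsto> 1]"
proof -
  have e: "(\<lambda>Y. if compatible Obeta Y then [Oalpha \<mapsto> (1::int)] Y else None)(Obeta \<mapsto> 1) = [Oalpha \<mapsto> 1, Obeta \<mapsto> 1]"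
    by (auto simp: fun_eq_iff compatible_def contexts_def ctx_set_def)
  have p1: "prop_step [Oalpha \<mapsto> 1, Obeta \<mapsto> 1] = [Oalpha \<mapsto> 1, Obeta \<mapsto> 1, Ogamma \<mapsto> 1]"
    by (simp add: prop_step_def contexts_def)
  have p2: "prop_step [Oalpha \<mapsto> 1, Obeta \<mapsto> 1, Ogamma \<mapsto> 1] = [Oalpha \<mapsto> 1, Obeta \<mapsto> 1, Ogamma \<mapsto> 1]"
    by (simp add: prop_step_def contexts_def)
  show ?thesis
    by (simp add: run_cons2 run_single process_def Let_def e propagate_fix2[OF p1 p2])
qed

lemma run_pair3: "run [Pos OA, Pos Oa] = Some [OA \<mapsto> 1, Oa \<mapsto> 1, Oalpha \<mapsto> 1]"
proof -
  have e: "(\<lambda>Y. if compatible Oa Y then [OA \<mapsto> (1::int)] Y else None)(Oa \<mapsto> 1) = [OA \<mapsto> 1, Oa \<mapsto> 1]"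
    by (auto simp: fun_eq_iff compatible_def contexts_def ctx_set_def)
  have p1: "prop_step [OA \<mapsto> 1, Oa \<mapsto> 1] = [OA \<mapsto> 1, Oa \<mapsto> 1, Oalpha \<mapsto> 1]"
    by (simp add: prop_step_def contexts_def)
  have p2: "prop_step [OA \<mapsto> 1, Oa \<mapsto> 1, Oalpha \<mapsto> 1] = [OA \<mapsto> 1, Oa \<mapsto> 1, Oalpha \<mapsto> 1]"
    by (simp add: prop_step_def contexts_def)
  show ?thesis
    by (simp add: run_cons2 run_single process_def Let_def e propagate_fix2[OF p1 p2])
qed

lemma run_pair4: "run [Pos OB, Pos Ob] = Some [OB \<mapsto> 1, Ob \<mapsto> 1, Obeta \<mapsto> 1]"
proof -
  have e: "(\<lambda>Y. if compatible Ob Y then [OB \<mapsto> (1::int)] Y else None)(Ob \<mapsto> 1) = [OB \<mapsto> 1, Ob \<mapsto> 1]"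
    by (auto simp: fun_eq_iff compatible_def contexts_def ctx_set_def)
  have p1: "prop_step [OB \<mapsto> 1, Ob \<mapsto> 1] = [OB \<mapsto> 1, Ob \<mapsto> 1, Obeta \<mapsto> 1]"
    by (simp add: prop_step_def contexts_def)
  have p2: "prop_step [OB \<mapsto> 1, Ob \<mapsto> 1, Obeta \<mapsto> 1] = [OB \<mapsto> 1, Ob \<mapsto> 1, Obeta \<mapsto> 1]"
    by (simp add: prop_step_def contexts_def)
  show ?thesis
    by (simp add: run_cons2 run_single process_def Let_def e propagate_fix2[OF p1 p2])
qed

lemma run_pair5: "run [Pos OC, Pos Oc] = Some [OC \<mapsto> 1, Oc \<mapsto> 1, Ogamma \<mapsto> -1]"
proof -
  have e: "(\<lambda>Y. if compatible Oc Y then [OC \<mapsto> (1::int)] Y else None)(Oc \<mapsto> 1) = [OC \<mapsto> 1, Oc \<mapsto> 1]"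
    by (auto simp: fun_eq_iff compatible_def contexts_def ctx_set_def)
  have p1: "prop_step [OC \<mapsto> 1, Oc \<mapsto> 1] = [OC \<mapsto> 1, Oc \<mapsto> 1, Ogamma \<mapsto> -1]"
    by (simp add: prop_step_def contexts_def)
  have p2: "prop_step [OC \<mapsto> 1, Oc \<mapsto> 1, Ogamma \<mapsto> -1] = [OC \<mapsto> 1, Oc \<mapsto> 1, Ogamma \<mapsto> -1]"
    by (simp add: prop_step_def contexts_def)
  show ?thesis
    by (simp add: run_cons2 run_single process_def Let_def e propagate_fix2[OF p1 p2])
qed

definition ws :: "letter list list" where
  "ws = [[Pos OA], [Pos OB], [Pos OC], [Pos Oa], [Pos Ob], [Pos Oc], [Pos Oalpha], [Pos Obeta], [Pos Ogamma], [Neg OA], [Neg OB], [Neg OC], [Neg Oa], [Neg Ob], [Neg Oc], [Neg Oalpha], [Neg Obeta], [Neg Ogamma], [Pos OA, Pos OB], [Pos Oa, Pos Ob], [Pos Oalpha, Pos Obeta], [Pos OA, Pos Oa], [Pos OB, Pos Ob], [Pos OC, Pos Oc]]"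

definition As :: "assignment list" where
  "As = [[OA \<mapsto> 1], [OB \<mapsto> 1], [OC \<mapsto> 1], [Oa \<mapsto> 1], [Ob \<mapsto> 1], [Oc \<mapsto> 1], [Oalpha \<mapsto> 1], [Obeta \<mapsto> 1], [Ogamma \<mapsto> 1], [OA \<mapsto> -1], [OB \<mapsto> -1], [OC \<mapsto> -1], [Oa \<mapsto> -1], [Ob \<mapsto> -1], [Oc \<mapsto> -1], [Oalpha \<mapsto> -1], [Obeta \<mapsto> -1], [Ogamma \<mapsto> -1], [OA \<mapsto> 1, OB \<mapsto> 1, OC \<mapsto> 1], [Oa \<mapsto> 1, Ob \<mapsto> 1, Oc \<mapsto> 1], [Oalpha \<mapsto> 1, Obeta \<mapsto> 1, Ogamma \<mapsto> 1], [OA \<mapsto> 1, Oa \<mapsto> 1, Oalpha \<mapsto> 1], [OB \<mapsto> 1, Ob \<mapsto> 1, Obeta \<mapsto> 1], [OC \<mapsto> 1, Oc \<mapsto> 1, Ogamma \<mapsto> -1]]"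

definition allobs :: "obs list" where
  "allobs = [OA, OB, OC, Oa, Ob, Oc, Oalpha, Obeta, Ogamma]"

lemma allobs_all: "s \<in> set allobs"
  by (cases s) (auto simp: allobs_def)

definition sigA :: "assignment \<Rightarrow> obs \<Rightarrow> outcome" where
  "sigA a s = (case a s of None \<Rightarrow> R | Some v \<Rightarrow> if v = 1 then One else MinusOne)"

lemma ws_run: "map run ws = map Some As"
  by (simp add: ws_def As_def run_single run_pair0 run_pair1 run_pair2 run_pair3 run_pair4 run_pair5)

lemma As_vals: "list_all (\<lambda>a. list_all (\<lambda>s. a s = None \<or> a s = Some 1 \<or> a s = Some (-1)) allobs) As"
  by (simp add: As_def allobs_def)

lemma As_dist: "distinct (map (\<lambda>a. map (sigA a) allobs) As)"
  by (simp add: As_def allobs_def sigA_def)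

lemma ws_len: "length ws = 24" and As_len: "length As = 24"
  by (simp_all add: ws_def As_def)

theorem mainTheorem7:
  fixes S :: "'s set" and m :: "letter list \<Rightarrow> 's" and M1 :: "'s \<Rightarrow> obs \<Rightarrow> outcome"
  assumes m_in: "\<forall>\<sigma>. consistent \<sigma> \<longrightarrow> m \<sigma> \<in> S"
    and pos: "\<forall>\<sigma> s. consistent \<sigma> \<longrightarrow> final_assign \<sigma> s = Some 1 \<longrightarrow> M1 (m \<sigma>) s = One"
    and neg: "\<forall>\<sigma> s. consistent \<sigma> \<longrightarrow> final_assign \<sigma> s = Some (-1) \<longrightarrow> M1 (m \<sigma>) s = MinusOne"
    and rnd: "\<forall>\<sigma> s. consistent \<sigma> \<longrightarrow> final_assign \<sigma> s = None \<longrightarrow> M1 (m \<sigma>) s = R"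
  shows "infinite S \<or> 24 \<le> card S"
proof (cases "finite S")
  case False then show ?thesis by simp
next
  case True
  have runi: "run (ws ! i) = Some (As ! i)" if "i < 24" for i
    using arg_cong[OF ws_run, of "\<lambda>l. l ! i"] that ws_len As_len by simp
  have ci: "consistent (ws ! i)" if "i < 24" for i
    using runi[OF that] by (simp add: consistent_def)
  have key: "M1 (m (ws ! i)) = sigA (As ! i)" if "i < 24" for i
  proof
    fix s
    have fa: "final_assign (ws ! i) = As ! i" using runi[OF that] by (simp add: final_assign_def)
    have "As ! i \<in> set As" using that As_len by simp
    then have "(As ! i) s = None \<or> (As ! i) s = Some 1 \<or> (As ! i) s = Some (-1)"
      using As_vals allobs_all by (simp add: list_all_iff)
    then show "M1 (m (ws ! i)) s = sigA (As ! i) s"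
      using ci[OF that] pos neg rnd fa by (auto simp: sigA_def)
  qed
  have inj: "inj_on (\<lambda>i. m (ws ! i)) {..<24}"
  proof (rule inj_onI)
    fix i j assume ij: "i \<in> {..<24::nat}" "j \<in> {..<24::nat}" "m (ws ! i) = m (ws ! j)"
    then have "sigA (As ! i) = sigA (As ! j)" using key by (metis lessThan_iff)
    then have "map (\<lambda>a. map (sigA a) allobs) As ! i = map (\<lambda>a. map (sigA a) allobs) As ! j"
      using ij As_len by (simp del: nth_map add: nth_map[of i] nth_map[of j])
    moreover have "i < length (map (\<lambda>a. map (sigA a) allobs) As)" "j < length (map (\<lambda>a. map (sigA a) allobs) As)"
      using ij As_len by auto
    ultimately show "i = j" using As_dist nth_eq_iff_index_eq by blast
  qed
  have sub: "(\<lambda>i. m (ws ! i)) ` {..<24} \<subseteq> S" using m_in ci by auto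
  have "card ((\<lambda>i. m (ws ! i)) ` {..<24::nat}) = 24" using card_image[OF inj] by simp
  then show ?thesis using card_mono[OF True sub] by simp
qed

end
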